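(* Let $J\subset I$, $w\in W^J$ and $u\in W$ with $l(uw)=l(u)+l(w)$. Write $uw=xv$ with $x\in W^J$ and $v\in W_J$. Then for any $v'\in W$ with $v'\le v$ there exists $u'\in W$ with $u'\le u$ such that $u'w=xv'$.
   Context: $W$ is the Weyl group of a semisimple group with simple reflections $s_i$, $i\in I$, length $l$ and Bruhat order $\le$. For $J\subset I$, $W_J$ is the subgroup generated by $\{s_j:j\in J\}$ and $W^J$ the set of minimal length representatives of $W/W_J$. *)

theory Defs
  imports Main
begin

text \<open>The Weyl group W is given by its Coxeter presentation: generators s_i (i in I),
 relations s_i^2 = 1 and the braid relations (s_i s_j)^(m i j) = 1 for i distinct from j.
 Elements of W are equivalence classes of words (lists over I).\<close>

fun alt :: "'i \<Rightarrow> 'i \<Rightarrow> nat \<Rightarrow> 'i list" where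
  "alt i j 0 = []"
| "alt i j (Suc n) = i # alt j i n"

definition cox_rels :: "('i \<Rightarrow> 'i \<Rightarrow> nat) \<Rightarrow> 'i set \<Rightarrow> ('i list \<times> 'i list) set" where
  "cox_rels m I = {([i, i], []) | i. i \<in> I}
     \<union> {(alt i j (m i j), alt j i (m i j)) | i j. i \<in> I \<and> j \<in> I \<and> i \<noteq> j}"

definition cox_step :: "('i \<Rightarrow> 'i \<Rightarrow> nat) \<Rightarrow> 'i set \<Rightarrow> ('i list \<times> 'i list) set" where
  "cox_step m I = {(xs @ l @ ys, xs @ r @ ys) | xs ys l r.
      xs \<in> lists I \<and> ys \<in> lists I \<and> ((l, r) \<in> cox_rels m I \<or> (r, l) \<in> cox_rels m I)}"

definition cox_eq :: "('i \<Rightarrow> 'i \<Rightarrow> nat) \<Rightarrow> 'i set \<Rightarrow> ('i list \<times> 'i list) set" where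
  "cox_eq m I = Id_on (lists I) \<union> (cox_step m I)\<^sup>+"

definition cox_elem :: "('i \<Rightarrow> 'i \<Rightarrow> nat) \<Rightarrow> 'i set \<Rightarrow> 'i list \<Rightarrow> 'i list set" where
  "cox_elem m I w = cox_eq m I `` {w}"

definition cox_group :: "('i \<Rightarrow> 'i \<Rightarrow> nat) \<Rightarrow> 'i set \<Rightarrow> 'i list set set" where
  "cox_group m I = cox_elem m I ` lists I"

definition cox_mult :: "('i \<Rightarrow> 'i \<Rightarrow> nat) \<Rightarrow> 'i set \<Rightarrow> 'i list set \<Rightarrow> 'i list set \<Rightarrow> 'i list set" where
  "cox_mult m I a b = \<Union> {cox_elem m I (u @ v) | u v. u \<in> a \<and> v \<in> b}"

definition cox_len :: "'i list set \<Rightarrow> nat" where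
  "cox_len a = (LEAST n. \<exists>w \<in> a. length w = n)"

definition parabolic :: "('i \<Rightarrow> 'i \<Rightarrow> nat) \<Rightarrow> 'i set \<Rightarrow> 'i set \<Rightarrow> 'i list set set" where
  "parabolic m I J = cox_elem m I ` lists J"

definition min_reps :: "('i \<Rightarrow> 'i \<Rightarrow> nat) \<Rightarrow> 'i set \<Rightarrow> 'i set \<Rightarrow> 'i list set set" where
  "min_reps m I J = {x \<in> cox_group m I. \<forall>y \<in> parabolic m I J. cox_len x \<le> cox_len (cox_mult m I x y)}"

definition reflections :: "('i \<Rightarrow> 'i \<Rightarrow> nat) \<Rightarrow> 'i set \<Rightarrow> 'i list set set" where
  "reflections m I = {cox_elem m I (w @ [i] @ rev w) | w i. w \<in> lists I \<and> i \<in> I}"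

definition bruhat_le :: "('i \<Rightarrow> 'i \<Rightarrow> nat) \<Rightarrow> 'i set \<Rightarrow> 'i list set \<Rightarrow> 'i list set \<Rightarrow> bool" where
  "bruhat_le m I u v \<longleftrightarrow> u \<in> cox_group m I \<and>
     (u, v) \<in> {(x, cox_mult m I x t) | x t. x \<in> cox_group m I \<and> t \<in> reflections m I
                 \<and> cox_len x < cox_len (cox_mult m I x t)}\<^sup>*"

text \<open>Coxeter matrix of a Weyl group of a semisimple group: finite index set,
 symmetric, off-diagonal entries crystallographic (2,3,4,6); together with finiteness of W
 this characterizes Weyl groups of (reduced) root systems.\<close>
definition weyl_matrix :: "('i \<Rightarrow> 'i \<Rightarrow> nat) \<Rightarrow> 'i set \<Rightarrow> bool" where
  "weyl_matrix m I \<longleftrightarrow> finite I \<and> (\<forall>i\<in>I. m i i = 1) \<and>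
     (\<forall>i\<in>I. \<forall>j\<in>I. m i j = m j i \<and> (i \<noteq> j \<longrightarrow> m i j \<in> {2, 3, 4, 6}))"

end

theory Submission
  imports Defs
begin

lemma alt_set: "set (alt i j n) \<subseteq> {i, j}"
  by (induction n arbitrary: i j) auto

fun wrefs :: "'a list \<Rightarrow> 'a list list" where
  "wrefs [] = []"
| "wrefs (s # ws) = [s] # map (\<lambda>r. s # r @ [s]) (wrefs ws)"

lemma wrefs_append: "wrefs (a @ b) = wrefs a @ map (\<lambda>r. a @ r @ rev a) (wrefs b)"
  by (induction a) auto

lemma length_wrefs[simp]: "length (wrefs ws) = length ws"
  by (induction ws) auto

lemma wrefs_nth: "k < length ws \<Longrightarrow> wrefs ws ! k = take k ws @ [ws ! k] @ rev (take k ws)"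
proof (induction ws arbitrary: k)
  case Nil then show ?case by simp
next
  case (Cons s ws)
  show ?case
  proof (cases k)
    case 0 then show ?thesis by simp
  next
    case (Suc k')
    then have "k' < length ws" using Cons.prems by simp
    then show ?thesis using Cons.IH[of k'] Suc by simp
  qed
qed

lemma wrefs_lists: "ws \<in> lists A \<Longrightarrow> set (wrefs ws) \<subseteq> lists A"
  by (induction ws) (auto, meson in_listsD subsetD)

lemma alt_Suc_right: "alt i j (Suc n) = alt i j n @ [if even n then i else j]"
  by (induction n arbitrary: i j) auto

lemma length_alt[simp]: "length (alt i j n) = n"
  by (induction n arbitrary: i j) auto

lemma take_alt: "k \<le> n \<Longrightarrow> take k (alt i j n) = alt i j k"
  by (induction n arbitrary: i j k) (auto simp: take_Cons split: nat.splits)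

lemma nth_alt: "k < n \<Longrightarrow> alt i j n ! k = (if even k then i else j)"
  by (induction n arbitrary: i j k) (auto simp: nth_Cons split: nat.splits)

lemma alt_add: "alt i j (a + b) = alt i j a @ (if even a then alt i j b else alt j i b)"
  by (induction a arbitrary: i j) auto

lemma rev_alt: "rev (alt i j n) = (if even n then alt j i n else alt i j n)"
proof (induction n arbitrary: i j)
  case 0 then show ?case by simp
next
  case (Suc n)
  have "rev (alt i j (Suc n)) = rev (alt j i n) @ [i]" by simp
  also have "\<dots> = (if even n then alt i j n @ [i] else alt j i n @ [i])" using Suc.IH by simp
  also have "\<dots> = (if even (Suc n) then alt j i (Suc n) else alt i j (Suc n))"
    by (simp only: alt_Suc_right) auto
  finally show ?case .
qed

lemma alt_pal: "alt i j k @ [if even k then i else j] @ rev (alt i j k) = alt i j (Suc (2 * k))"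
proof -
  have "Suc (2 * k) = Suc k + k" by simp
  then have "alt i j (Suc (2 * k)) = alt i j (Suc k + k)" by (rule arg_cong)
  also have "\<dots> = alt i j (Suc k) @ (if even (Suc k) then alt i j k else alt j i k)"
    by (rule alt_add)
  finally show ?thesis by (simp del: alt.simps(2) add: alt_Suc_right rev_alt)
qed

lemma wrefs_alt: "k < n \<Longrightarrow> wrefs (alt i j n) ! k = alt i j (Suc (2 * k))"
proof -
  assume h: "k < n"
  have "wrefs (alt i j n) ! k = take k (alt i j n) @ [alt i j n ! k] @ rev (take k (alt i j n))"
    by (rule wrefs_nth) (simp add: h)
  also have "\<dots> = alt i j k @ [if even k then i else j] @ rev (alt i j k)"
    by (simp only: take_alt[OF less_imp_le[OF h]] nth_alt[OF h])
  finally show ?thesis by (simp only: alt_pal)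
qed

lemma rev_lists[simp]: "a \<in> lists A \<Longrightarrow> rev a \<in> lists A"
  by auto

context
  fixes m :: "'i \<Rightarrow> 'i \<Rightarrow> nat" and I :: "'i set"
begin

abbreviation "CE \<equiv> cox_eq m I"
abbreviation "cls \<equiv> cox_elem m I"

lemma rels_lists: "(l, r) \<in> cox_rels m I \<Longrightarrow> l \<in> lists I \<and> r \<in> lists I"
  unfolding cox_rels_def using alt_set by fastforce

lemma step_lists: "(a, b) \<in> cox_step m I \<Longrightarrow> a \<in> lists I \<and> b \<in> lists I"
  unfolding cox_step_def using rels_lists by fastforce

lemma step_sym: "(a, b) \<in> cox_step m I \<Longrightarrow> (b, a) \<in> cox_step m I"
  unfolding cox_step_def by blast

lemma CE_lists: "(a, b) \<in> CE \<Longrightarrow> a \<in> lists I \<and> b \<in> lists I"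
proof -
  assume "(a, b) \<in> CE"
  then consider "(a, b) \<in> Id_on (lists I)" | "(a, b) \<in> (cox_step m I)\<^sup>+"
    unfolding cox_eq_def by blast
  then show ?thesis
  proof cases
    case 1 then show ?thesis by (auto simp: Id_on_def)
  next
    case 2 then show ?thesis
      by (induction rule: trancl_induct) (auto dest: step_lists)
  qed
qed

lemma CE_refl: "a \<in> lists I \<Longrightarrow> (a, a) \<in> CE"
  unfolding cox_eq_def by (auto simp: Id_on_def)

lemma CE_sym: "(a, b) \<in> CE \<Longrightarrow> (b, a) \<in> CE"
proof -
  assume "(a, b) \<in> CE"
  then consider "(a, b) \<in> Id_on (lists I)" | "(a, b) \<in> (cox_step m I)\<^sup>+"
    unfolding cox_eq_def by blast
  then show ?thesis
  proof cases
    case 1 then show ?thesis by (auto simp: Id_on_def cox_eq_def)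
  next
    case 2
    then have "(b, a) \<in> (cox_step m I)\<^sup>+"
    proof (induction rule: trancl_induct)
      case (base y) then show ?case by (auto dest: step_sym)
    next
      case (step y z)
      then show ?case by (meson step_sym trancl_into_trancl2)
    qed
    then show ?thesis unfolding cox_eq_def by blast
  qed
qed

lemma CE_trans: "(a, b) \<in> CE \<Longrightarrow> (b, c) \<in> CE \<Longrightarrow> (a, c) \<in> CE"
proof -
  assume h1: "(a, b) \<in> CE" and h2: "(b, c) \<in> CE"
  show ?thesis
  proof (cases "a = b")
    case True then show ?thesis using h2 by simp
  next
    case False
    then have 1: "(a, b) \<in> (cox_step m I)\<^sup>+" using h1 unfolding cox_eq_def Id_on_def by blast
    show ?thesis
    proof (cases "b = c")
      case True then show ?thesis using h1 by simp
    next
      case False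
      then have 2: "(b, c) \<in> (cox_step m I)\<^sup>+" using h2 unfolding cox_eq_def Id_on_def by blast
      from trancl_trans[OF 1 2] show ?thesis unfolding cox_eq_def by blast
    qed
  qed
qed

lemma step_cong: "(a, b) \<in> cox_step m I \<Longrightarrow> c \<in> lists I \<Longrightarrow> d \<in> lists I
   \<Longrightarrow> (c @ a @ d, c @ b @ d) \<in> cox_step m I"
proof -
  assume "(a, b) \<in> cox_step m I" and c: "c \<in> lists I" and d: "d \<in> lists I"
  then obtain xs ys l r where a: "a = xs @ l @ ys" and b: "b = xs @ r @ ys"
    and h: "xs \<in> lists I" "ys \<in> lists I" "(l, r) \<in> cox_rels m I \<or> (r, l) \<in> cox_rels m I"
    unfolding cox_step_def by blast
  have "c @ a @ d = (c @ xs) @ l @ (ys @ d)" "c @ b @ d = (c @ xs) @ r @ (ys @ d)"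
    using a b by auto
  moreover have "c @ xs \<in> lists I" "ys @ d \<in> lists I" using h c d by auto
  ultimately show ?thesis using h(3) unfolding cox_step_def by blast
qed

lemma CE_cong: "(a, b) \<in> CE \<Longrightarrow> c \<in> lists I \<Longrightarrow> d \<in> lists I \<Longrightarrow> (c @ a @ d, c @ b @ d) \<in> CE"
proof -
  assume ab: "(a, b) \<in> CE" and c: "c \<in> lists I" and d: "d \<in> lists I"
  then consider "(a, b) \<in> Id_on (lists I)" | "(a, b) \<in> (cox_step m I)\<^sup>+"
    unfolding cox_eq_def by blast
  then show ?thesis
  proof cases
    case 1 then show ?thesis using c d by (auto simp: Id_on_def cox_eq_def)
  next
    case 2
    then have "(c @ a @ d, c @ b @ d) \<in> (cox_step m I)\<^sup>+"
    proof (induction rule: trancl_induct)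
      case (base y) then show ?case using step_cong c d by blast
    next
      case (step y z)
      then show ?case using step_cong c d by (meson trancl_into_trancl)
    qed
    then show ?thesis unfolding cox_eq_def by blast
  qed
qed

lemma CE_app: "(a, b) \<in> CE \<Longrightarrow> (c, d) \<in> CE \<Longrightarrow> (a @ c, b @ d) \<in> CE"
proof -
  assume ab: "(a, b) \<in> CE" and cd: "(c, d) \<in> CE"
  have 1: "(a @ c, b @ c) \<in> CE"
    using CE_cong[OF ab, of "[]" c] CE_lists[OF cd] by simp
  have 2: "(b @ c, b @ d) \<in> CE"
    using CE_cong[OF cd, of b "[]"] CE_lists[OF ab] by simp
  show ?thesis using CE_trans[OF 1 2] by simp
qed

lemma CE_rel: "(l, r) \<in> cox_rels m I \<Longrightarrow> (l, r) \<in> CE"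
proof -
  assume h: "(l, r) \<in> cox_rels m I"
  have "([] @ l @ [], [] @ r @ []) \<in> cox_step m I"
    unfolding cox_step_def using h by blast
  then show ?thesis unfolding cox_eq_def by auto
qed

lemma CE_ii: "i \<in> I \<Longrightarrow> ([i, i], []) \<in> CE"
  by (rule CE_rel) (auto simp: cox_rels_def)

lemma CE_inv: "a \<in> lists I \<Longrightarrow> (a @ rev a, []) \<in> CE"
proof (induction a)
  case Nil then show ?case by (simp add: CE_refl)
next
  case (Cons x a)
  then have x: "x \<in> I" and a: "a \<in> lists I" by auto
  have "(x # a @ rev a @ [x], [x, x]) \<in> CE"
    using CE_cong[OF Cons.IH[OF a], of "[x]" "[x]"] x by simp
  from CE_trans[OF this CE_ii[OF x]] show ?case by simp
qed

lemma CE_inv2: "a \<in> lists I \<Longrightarrow> (rev a @ a, []) \<in> CE"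
  using CE_inv[of "rev a"] by (simp add: rev_lists)

lemma CE_cancel: "(X @ rev Y, []) \<in> CE \<Longrightarrow> Y \<in> lists I \<Longrightarrow> (X, Y) \<in> CE"
proof -
  assume h: "(X @ rev Y, []) \<in> CE" and Y: "Y \<in> lists I"
  have X: "X \<in> lists I" using CE_lists[OF h] by auto
  have A: "(X @ rev Y @ Y, X) \<in> CE" using CE_app[OF CE_refl[OF X] CE_inv2[OF Y]] by simp
  have B: "(X @ rev Y @ Y, Y) \<in> CE" using CE_app[OF h CE_refl[OF Y]] by simp
  show ?thesis using CE_trans[OF CE_sym[OF A] B] .
qed

lemma CE_rev: "(a, b) \<in> CE \<Longrightarrow> (rev a, rev b) \<in> CE"
proof -
  assume h: "(a, b) \<in> CE"
  have a: "a \<in> lists I" and b: "b \<in> lists I" using CE_lists[OF h] by auto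
  have 1: "(rev a @ b @ rev b, rev a) \<in> CE"
    using CE_app[OF CE_refl CE_inv[OF b], of "rev a"] a by simp
  have 2: "(rev a @ a @ rev b, rev a @ b @ rev b) \<in> CE"
    using CE_cong[OF h, of "rev a" "rev b"] a b by simp
  have 3: "(rev a @ a @ rev b, rev b) \<in> CE"
    using CE_app[OF CE_inv2[OF a] CE_refl, of "rev b"] b by simp
  show ?thesis using CE_trans[OF CE_trans[OF CE_sym[OF 1] CE_sym[OF 2]] 3] .
qed

lemma in_cls: "b \<in> cls a \<longleftrightarrow> (a, b) \<in> CE"
  unfolding cox_elem_def by auto

lemma cls_eqI: "(a, b) \<in> CE \<Longrightarrow> cls a = cls b"
  unfolding cox_elem_def using CE_sym CE_trans by blast

lemma cls_eq_iff: "a \<in> lists I \<Longrightarrow> cls a = cls b \<longleftrightarrow> (a, b) \<in> CE"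
  using cls_eqI in_cls CE_refl CE_sym by blast

lemma mult_cls: "a \<in> lists I \<Longrightarrow> b \<in> lists I \<Longrightarrow> cox_mult m I (cls a) (cls b) = cls (a @ b)"
proof -
  assume a: "a \<in> lists I" and b: "b \<in> lists I"
  have eq: "{cls (u @ v) | u v. u \<in> cls a \<and> v \<in> cls b} = {cls (a @ b)}"
  proof
    show "{cls (u @ v) | u v. u \<in> cls a \<and> v \<in> cls b} \<subseteq> {cls (a @ b)}"
    proof
      fix X assume "X \<in> {cls (u @ v) | u v. u \<in> cls a \<and> v \<in> cls b}"
      then obtain u v where X: "X = cls (u @ v)" and "(a, u) \<in> CE" "(b, v) \<in> CE"
        unfolding in_cls by blast
      then have "cls (a @ b) = cls (u @ v)" using cls_eqI CE_app by blast
      then show "X \<in> {cls (a @ b)}" using X by simp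
    qed
    have "a \<in> cls a" "b \<in> cls b" using a b CE_refl in_cls by blast+
    then show "{cls (a @ b)} \<subseteq> {cls (u @ v) | u v. u \<in> cls a \<and> v \<in> cls b}"
      by blast
  qed
  show ?thesis unfolding cox_mult_def eq by simp
qed

lemma grp_obtain: "c \<in> cox_group m I \<Longrightarrow> \<exists>a \<in> lists I. c = cls a"
  unfolding cox_group_def by blast

lemma cls_grp: "a \<in> lists I \<Longrightarrow> cls a \<in> cox_group m I"
  unfolding cox_group_def by blast

lemma len_le: "(a, b) \<in> CE \<Longrightarrow> cox_len (cls a) \<le> length b"
  unfolding cox_len_def by (rule Least_le) (auto simp: in_cls)

lemma len_ex: "a \<in> lists I \<Longrightarrow> \<exists>b. (a, b) \<in> CE \<and> length b = cox_len (cls a)"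
proof -
  assume a: "a \<in> lists I"
  have "\<exists>n. \<exists>w \<in> cls a. length w = n" using CE_refl[OF a] in_cls by blast
  then have "\<exists>w \<in> cls a. length w = cox_len (cls a)"
    unfolding cox_len_def by (rule LeastI_ex)
  then show ?thesis by (auto simp: in_cls)
qed

lemma len_rev_le: "a \<in> lists I \<Longrightarrow> cox_len (cls (rev a)) \<le> cox_len (cls a)"
proof -
  assume a: "a \<in> lists I"
  obtain b where ab: "(a, b) \<in> CE" "length b = cox_len (cls a)" using len_ex[OF a] by blast
  have "cox_len (cls (rev a)) \<le> length (rev b)" by (rule len_le[OF CE_rev[OF ab(1)]])
  then show ?thesis using \<open>length b = cox_len (cls a)\<close> by simp
qed

lemma len_rev: "a \<in> lists I \<Longrightarrow> cox_len (cls (rev a)) = cox_len (cls a)"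
proof -
  assume a: "a \<in> lists I"
  have "rev a \<in> lists I" using a by simp
  from len_rev_le[OF this] have "cox_len (cls a) \<le> cox_len (cls (rev a))" by simp
  with len_rev_le[OF a] show ?thesis by simp
qed


lemma alt_lists: "i \<in> I \<Longrightarrow> j \<in> I \<Longrightarrow> alt i j n \<in> lists I"
  using alt_set[of i j n] by (auto simp: in_lists_conv_set)

definition cnt :: "'i list list \<Rightarrow> 'i list \<Rightarrow> nat" where
  "cnt L t = length (filter (\<lambda>r. (r, t) \<in> CE) L)"

definition eta :: "'i list \<Rightarrow> 'i list \<Rightarrow> bool" where
  "eta ws t = odd (cnt (wrefs ws) t)"

lemma cnt_append: "cnt (L1 @ L2) t = cnt L1 t + cnt L2 t"
  by (simp add: cnt_def)

lemma conj_iff: "a \<in> lists I \<Longrightarrow> r \<in> lists I \<Longrightarrow> t \<in> lists I \<Longrightarrow>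
  ((a @ r @ rev a, t) \<in> CE) = ((r, rev a @ t @ a) \<in> CE)"
proof
  assume a: "a \<in> lists I" and r: "r \<in> lists I" and t: "t \<in> lists I"
  {
    assume h: "(a @ r @ rev a, t) \<in> CE"
    have 1: "(rev a @ a @ r @ rev a @ a, rev a @ t @ a) \<in> CE"
      using CE_cong[OF h, of "rev a" a] a by simp
    have 2: "(rev a @ a @ r @ rev a @ a, r) \<in> CE"
      using CE_app[OF CE_inv2[OF a] CE_app[OF CE_refl[OF r] CE_inv2[OF a]]] by simp
    show "(r, rev a @ t @ a) \<in> CE" using CE_trans[OF CE_sym[OF 2] 1] .
  }
  {
    assume h: "(r, rev a @ t @ a) \<in> CE"
    have 1: "(a @ r @ rev a, a @ rev a @ t @ a @ rev a) \<in> CE"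
      using CE_cong[OF h, of a "rev a"] a by simp
    have 2: "(a @ rev a @ t @ a @ rev a, t) \<in> CE"
      using CE_app[OF CE_inv[OF a] CE_app[OF CE_refl[OF t] CE_inv[OF a]]] by simp
    show "(a @ r @ rev a, t) \<in> CE" using CE_trans[OF 1 2] .
  }
qed

lemma cnt_map_conj: "a \<in> lists I \<Longrightarrow> t \<in> lists I \<Longrightarrow> set L \<subseteq> lists I \<Longrightarrow>
  cnt (map (\<lambda>r. a @ r @ rev a) L) t = cnt L (rev a @ t @ a)"
proof -
  assume a: "a \<in> lists I" and t: "t \<in> lists I" and L: "set L \<subseteq> lists I"
  have "filter (\<lambda>r. (a @ r @ rev a, t) \<in> CE) L = filter (\<lambda>r. (r, rev a @ t @ a) \<in> CE) L"
  proof (rule filter_cong[OF refl])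
    fix r assume "r \<in> set L"
    then have "r \<in> lists I" using L by blast
    then show "((a @ r @ rev a, t) \<in> CE) = ((r, rev a @ t @ a) \<in> CE)" using conj_iff a t by blast
  qed
  then show ?thesis by (simp add: cnt_def filter_map comp_def)
qed

lemma eta_append: "a \<in> lists I \<Longrightarrow> b \<in> lists I \<Longrightarrow> t \<in> lists I \<Longrightarrow>
  eta (a @ b) t = (eta a t \<noteq> eta b (rev a @ t @ a))"
proof -
  assume a: "a \<in> lists I" and b: "b \<in> lists I" and t: "t \<in> lists I"
  have "cnt (wrefs (a @ b)) t = cnt (wrefs a) t + cnt (wrefs b) (rev a @ t @ a)"
    unfolding wrefs_append cnt_append cnt_map_conj[OF a t wrefs_lists[OF b]] ..
  then show ?thesis unfolding eta_def by simp
qed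

lemma cnt_cong: "(t, t') \<in> CE \<Longrightarrow> cnt L t = cnt L t'"
proof -
  assume h: "(t, t') \<in> CE"
  have "filter (\<lambda>r. (r, t) \<in> CE) L = filter (\<lambda>r. (r, t') \<in> CE) L"
  proof (rule filter_cong[OF refl])
    fix r
    show "((r, t) \<in> CE) = ((r, t') \<in> CE)" using h CE_sym CE_trans by meson
  qed
  then show ?thesis by (simp add: cnt_def)
qed

lemma eta_cong: "(t, t') \<in> CE \<Longrightarrow> eta ws t = eta ws t'"
  unfolding eta_def using cnt_cong by simp

lemma cnt_all2: "list_all2 (\<lambda>a b. (a, b) \<in> CE) L1 L2 \<Longrightarrow> cnt L1 t = cnt L2 t"
proof (induction rule: list_all2_induct)
  case Nil then show ?case by simp
next
  case (Cons x xs y ys)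
  have "((x, t) \<in> CE) = ((y, t) \<in> CE)" using Cons.hyps(1) CE_sym CE_trans by meson
  then show ?case using Cons.IH by (simp add: cnt_def)
qed

lemma cnt_rev: "cnt (rev L) t = cnt L t"
  by (simp add: cnt_def rev_filter[symmetric])

lemma eta_nil: "eta [] t = False"
  by (simp add: eta_def cnt_def)

lemma alt_pal_CE: "(alt i j n, alt j i n) \<in> CE \<Longrightarrow> i \<in> I \<Longrightarrow> j \<in> I \<Longrightarrow> k < n \<Longrightarrow>
  (alt i j (Suc (2 * k)), alt j i (Suc (2 * (n - Suc k)))) \<in> CE"
proof -
  assume h: "(alt i j n, alt j i n) \<in> CE" and i: "i \<in> I" and j: "j \<in> I" and k: "k < n"
  define a where "a = Suc (2 * k)"
  define b where "b = Suc (2 * (n - Suc k))"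
  have ab: "a + b = n + n" using k unfolding a_def b_def by simp
  have oa: "odd a" and ob: "odd b" unfolding a_def b_def by simp_all
  have 1: "alt i j (n + n) = alt i j a @ alt j i b"
    using alt_add[of i j a b] ab oa by simp
  have 2: "alt i j (n + n) = alt i j n @ rev (alt j i n)"
    using alt_add[of i j n n] rev_alt[of j i n] by simp
  have 3: "(alt i j n @ rev (alt j i n), []) \<in> CE"
    using CE_trans[OF CE_app[OF h CE_refl[of "rev (alt j i n)"]] CE_inv[OF alt_lists[OF j i]]]
      alt_lists[OF j i] by simp
  have 4: "rev (alt j i b) = alt j i b" using rev_alt[of j i b] ob by simp
  have "(alt i j a @ rev (alt j i b), []) \<in> CE" using 1 2 3 4 by simp
  from CE_cancel[OF this alt_lists[OF j i]] show ?thesis unfolding a_def b_def .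
qed

lemma eta_rel: "(l, r) \<in> cox_rels m I \<Longrightarrow> eta l t = eta r t"
proof -
  assume h: "(l, r) \<in> cox_rels m I"
  then consider (ii) i where "l = [i, i]" "r = []" "i \<in> I"
    | (br) i j where "l = alt i j (m i j)" "r = alt j i (m i j)" "i \<in> I" "j \<in> I"
    unfolding cox_rels_def by blast
  then show ?thesis
  proof cases
    case ii
    have "([i] @ [i, i], [] @ [i]) \<in> CE" using CE_app[OF CE_refl CE_ii[OF ii(3)], of "[i]"] ii(3) by simp
    then have "([i, i, i], [i]) \<in> CE" using CE_app[OF CE_ii[OF ii(3)] CE_refl[of "[i]"]] ii(3) by simp
    then have "(([i, i, i], t) \<in> CE) = (([i], t) \<in> CE)" using CE_sym CE_trans by meson
    then show ?thesis using ii by (simp add: eta_def cnt_def)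
  next
    case br
    define n where "n = m i j"
    have hb: "(alt i j n, alt j i n) \<in> CE" using CE_rel h br unfolding n_def by simp
    have "list_all2 (\<lambda>a b. (a, b) \<in> CE) (wrefs (alt i j n)) (rev (wrefs (alt j i n)))"
    proof (rule list_all2_all_nthI)
      show "length (wrefs (alt i j n)) = length (rev (wrefs (alt j i n)))" by simp
    next
      fix k assume "k < length (wrefs (alt i j n))"
      then have k: "k < n" by simp
      have "rev (wrefs (alt j i n)) ! k = wrefs (alt j i n) ! (n - Suc k)"
        using k by (simp add: rev_nth)
      also have "\<dots> = alt j i (Suc (2 * (n - Suc k)))" using k by (simp add: wrefs_alt del: alt.simps(2))
      finally show "(wrefs (alt i j n) ! k, rev (wrefs (alt j i n)) ! k) \<in> CE"
        using alt_pal_CE[OF hb br(3) br(4) k] wrefs_alt[OF k, of i j] by simp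
    qed
    from cnt_all2[OF this, of t] have "cnt (wrefs (alt i j n)) t = cnt (wrefs (alt j i n)) t"
      by (simp add: cnt_rev)
    then show ?thesis using br unfolding eta_def n_def by simp
  qed
qed

lemma eta_step: "(a, b) \<in> cox_step m I \<Longrightarrow> t \<in> lists I \<Longrightarrow> eta a t = eta b t"
proof -
  assume h: "(a, b) \<in> cox_step m I" and t: "t \<in> lists I"
  then obtain xs ys l r where a: "a = xs @ l @ ys" and b: "b = xs @ r @ ys"
    and xs: "xs \<in> lists I" and ys: "ys \<in> lists I"
    and lr: "(l, r) \<in> cox_rels m I \<or> (r, l) \<in> cox_rels m I"
    unfolding cox_step_def by blast
  have l: "l \<in> lists I" and r: "r \<in> lists I" using lr rels_lists by blast+
  have lrE: "(l, r) \<in> CE" using lr CE_rel CE_sym by blast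
  define t1 where "t1 = rev xs @ t @ xs"
  have t1: "t1 \<in> lists I" using t xs unfolding t1_def by simp
  have e1: "eta l t1 = eta r t1" using lr eta_rel by metis
  have e2: "eta ys (rev l @ t1 @ l) = eta ys (rev r @ t1 @ r)"
    by (rule eta_cong) (rule CE_app[OF CE_rev[OF lrE] CE_app[OF CE_refl[OF t1] lrE]])
  have "eta a t = (eta xs t \<noteq> (eta l t1 \<noteq> eta ys (rev l @ t1 @ l)))"
    unfolding a using eta_append[OF xs _ t, of "l @ ys"] eta_append[OF l ys t1] l ys
    unfolding t1_def by simp
  moreover have "eta b t = (eta xs t \<noteq> (eta r t1 \<noteq> eta ys (rev r @ t1 @ r)))"
    unfolding b using eta_append[OF xs _ t, of "r @ ys"] eta_append[OF r ys t1] r ys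
    unfolding t1_def by simp
  ultimately show ?thesis using e1 e2 by simp
qed

lemma eta_CE: "(a, b) \<in> CE \<Longrightarrow> t \<in> lists I \<Longrightarrow> eta a t = eta b t"
proof -
  assume h: "(a, b) \<in> CE" and t: "t \<in> lists I"
  then consider "a = b" | "(a, b) \<in> (cox_step m I)\<^sup>+"
    unfolding cox_eq_def Id_on_def by blast
  then show ?thesis
  proof cases
    case 1 then show ?thesis by simp
  next
    case 2 then show ?thesis
      by (induction rule: trancl_induct) (use eta_step t in auto)
  qed
qed

lemma eta_ex: "eta ws t \<Longrightarrow> \<exists>k < length ws. (wrefs ws ! k, t) \<in> CE"
proof -
  assume "eta ws t"
  then have "filter (\<lambda>r. (r, t) \<in> CE) (wrefs ws) \<noteq> []"
    unfolding eta_def cnt_def by (intro notI) simp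
  then obtain r where "r \<in> set (wrefs ws)" "(r, t) \<in> CE"
    by (auto simp: filter_empty_conv)
  then show ?thesis by (metis in_set_conv_nth length_wrefs)
qed

lemma del_CE: "ws \<in> lists I \<Longrightarrow> k < length ws \<Longrightarrow>
  (wrefs ws ! k @ ws, take k ws @ drop (Suc k) ws) \<in> CE"
proof -
  assume ws: "ws \<in> lists I" and k: "k < length ws"
  define p where "p = take k ws"
  define x where "x = ws ! k"
  define d where "d = drop (Suc k) ws"
  have wsd: "ws = p @ [x] @ d" unfolding p_def x_def d_def using k by (simp add: id_take_nth_drop)
  have p: "p \<in> lists I" and x: "x \<in> I" and d: "d \<in> lists I" using ws wsd by auto
  have "([x] @ (rev p @ p) @ [x], [x] @ [] @ [x]) \<in> CE"
    using CE_app[OF CE_refl[of "[x]"] CE_app[OF CE_inv2[OF p] CE_refl[of "[x]"]]] x by simp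
  then have "(x # rev p @ p @ [x], []) \<in> CE" using CE_trans CE_ii[OF x] by simp
  then have "(p @ (x # rev p @ p @ [x]) @ d, p @ [] @ d) \<in> CE" using CE_cong p d by blast
  moreover have "wrefs ws ! k = p @ [x] @ rev p" unfolding p_def x_def using wrefs_nth[OF k] by simp
  ultimately show ?thesis using wsd unfolding p_def d_def by simp
qed

lemma key1: "ws \<in> lists I \<Longrightarrow> t \<in> lists I \<Longrightarrow> eta ws t \<Longrightarrow> cox_len (cls (t @ ws)) < cox_len (cls ws)"
proof -
  assume ws: "ws \<in> lists I" and t: "t \<in> lists I" and e: "eta ws t"
  obtain w0 where w0: "(ws, w0) \<in> CE" "length w0 = cox_len (cls ws)" using len_ex[OF ws] by blast
  have w0l: "w0 \<in> lists I" using CE_lists[OF w0(1)] by simp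
  have "eta w0 t" using e eta_CE[OF w0(1) t] by simp
  then obtain k where k: "k < length w0" "(wrefs w0 ! k, t) \<in> CE" using eta_ex by blast
  have "(t @ w0, wrefs w0 ! k @ w0) \<in> CE" using CE_app[OF CE_sym[OF k(2)] CE_refl[OF w0l]] .
  then have L: "(t @ w0, take k w0 @ drop (Suc k) w0) \<in> CE" using CE_trans del_CE[OF w0l k(1)] by blast
  have C: "cls (t @ ws) = cls (t @ w0)" using cls_eqI CE_app[OF CE_refl[OF t] w0(1)] by simp
  have "cox_len (cls (t @ ws)) \<le> length (take k w0 @ drop (Suc k) w0)"
    using len_le[OF L] C by simp
  also have "\<dots> < length w0" using k(1) by simp
  finally show ?thesis using w0(2) by simp
qed

lemma eta_single: "i \<in> I \<Longrightarrow> eta [i] [i]"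
  using CE_refl[of "[i]"] by (simp add: eta_def cnt_def)

lemma eta_self: "p \<in> lists I \<Longrightarrow> i \<in> I \<Longrightarrow> eta (p @ [i] @ rev p) (p @ [i] @ rev p)"
proof -
  assume p: "p \<in> lists I" and i: "i \<in> I"
  define t where "t = p @ [i] @ rev p"
  have t: "t \<in> lists I" using p i unfolding t_def by simp
  define s where "s = rev p @ t @ p"
  have s: "s \<in> lists I" using p t unfolding s_def by simp
  have si: "(s, [i]) \<in> CE"
    using CE_app[OF CE_inv2[OF p] CE_app[OF CE_refl[of "[i]"] CE_inv2[OF p]]] i
    unfolding s_def t_def by simp
  have "([i] @ s @ [i], [i] @ [i] @ [i]) \<in> CE" using CE_cong[OF si, of "[i]" "[i]"] i by simp
  then have sii: "([i] @ s @ [i], [i]) \<in> CE"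
    using CE_trans CE_app[OF CE_ii[OF i] CE_refl[of "[i]"]] i by simp
  have A: "eta (p @ ([i] @ rev p)) t = (eta p t \<noteq> eta ([i] @ rev p) s)"
    using eta_append[OF p _ t, of "[i] @ rev p"] p i unfolding s_def by simp
  have B: "eta ([i] @ rev p) s = (eta [i] s \<noteq> eta (rev p) ([i] @ s @ [i]))"
    using eta_append[of "[i]" "rev p" s] p i s by simp
  have B1: "eta [i] s" using eta_cong[OF si] eta_single[OF i] by simp
  have B2: "eta (rev p) ([i] @ s @ [i]) = eta (rev p) [i]" using eta_cong[OF sii] by simp
  have "eta (p @ rev p) t = eta [] t" using eta_CE[OF CE_inv[OF p] t] .
  then have C: "eta p t = eta (rev p) s" using eta_append[OF p _ t, of "rev p"] p eta_nil
    unfolding s_def by simp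
  have C2: "eta (rev p) s = eta (rev p) [i]" using eta_cong[OF si] by simp
  show ?thesis using A B B1 B2 C C2 unfolding t_def by simp
qed

lemma eta_flip: "p \<in> lists I \<Longrightarrow> i \<in> I \<Longrightarrow> ws \<in> lists I \<Longrightarrow>
  eta ((p @ [i] @ rev p) @ ws) (p @ [i] @ rev p) = (\<not> eta ws (p @ [i] @ rev p))"
proof -
  assume p: "p \<in> lists I" and i: "i \<in> I" and ws: "ws \<in> lists I"
  define t where "t = p @ [i] @ rev p"
  have t: "t \<in> lists I" using p i unfolding t_def by simp
  have rt: "rev t = t" unfolding t_def by simp
  have tt: "(t @ t, []) \<in> CE" using CE_inv[OF t] rt by simp
  have ttt: "(rev t @ t @ t, t) \<in> CE" using CE_app[OF tt CE_refl[OF t]] rt by simp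
  have "eta (t @ ws) t = (eta t t \<noteq> eta ws (rev t @ t @ t))" using eta_append[OF t ws t] .
  also have "\<dots> = (\<not> eta ws t)" using eta_self[OF p i] eta_cong[OF ttt] unfolding t_def by simp
  finally show ?thesis unfolding t_def .
qed

lemma key2: "ws \<in> lists I \<Longrightarrow> p \<in> lists I \<Longrightarrow> i \<in> I \<Longrightarrow> \<not> eta ws (p @ [i] @ rev p) \<Longrightarrow>
   cox_len (cls ws) < cox_len (cls ((p @ [i] @ rev p) @ ws))"
proof -
  assume ws: "ws \<in> lists I" and p: "p \<in> lists I" and i: "i \<in> I" and ne: "\<not> eta ws (p @ [i] @ rev p)"
  define t where "t = p @ [i] @ rev p"
  have t: "t \<in> lists I" using p i unfolding t_def by simp
  have rt: "rev t = t" unfolding t_def by simp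
  have tt: "(t @ t, []) \<in> CE" using CE_inv[OF t] rt by simp
  have "eta (t @ ws) t" using eta_flip[OF p i ws] ne unfolding t_def by simp
  from key1[OF _ t this] ws t have "cox_len (cls (t @ t @ ws)) < cox_len (cls (t @ ws))" by simp
  moreover have "cls (t @ t @ ws) = cls ws" using cls_eqI CE_app[OF tt CE_refl[OF ws]] by simp
  ultimately show ?thesis unfolding t_def by simp
qed

lemma keyR1: "ws \<in> lists I \<Longrightarrow> p \<in> lists I \<Longrightarrow> i \<in> I \<Longrightarrow> eta (rev ws) (p @ [i] @ rev p) \<Longrightarrow>
   cox_len (cls (ws @ (p @ [i] @ rev p))) < cox_len (cls ws)"
proof -
  assume ws: "ws \<in> lists I" and p: "p \<in> lists I" and i: "i \<in> I" and e: "eta (rev ws) (p @ [i] @ rev p)"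
  define t where "t = p @ [i] @ rev p"
  have t: "t \<in> lists I" using p i unfolding t_def by simp
  have rt: "rev t = t" unfolding t_def by simp
  have "cox_len (cls (t @ rev ws)) < cox_len (cls (rev ws))" using key1[OF _ t] e ws unfolding t_def by simp
  moreover have "cox_len (cls (rev (ws @ t))) = cox_len (cls (ws @ t))" using ws t by (intro len_rev) simp
  moreover have "cox_len (cls (rev ws)) = cox_len (cls ws)" using len_rev ws by simp
  ultimately show ?thesis using rt unfolding t_def by simp
qed

lemma keyR2: "ws \<in> lists I \<Longrightarrow> p \<in> lists I \<Longrightarrow> i \<in> I \<Longrightarrow> \<not> eta (rev ws) (p @ [i] @ rev p) \<Longrightarrow>
   cox_len (cls ws) < cox_len (cls (ws @ (p @ [i] @ rev p)))"
proof -
  assume ws: "ws \<in> lists I" and p: "p \<in> lists I" and i: "i \<in> I" and e: "\<not> eta (rev ws) (p @ [i] @ rev p)"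
  define t where "t = p @ [i] @ rev p"
  have t: "t \<in> lists I" using p i unfolding t_def by simp
  have rt: "rev t = t" unfolding t_def by simp
  have "cox_len (cls (rev ws)) < cox_len (cls (t @ rev ws))" using key2[OF _ p i] e ws unfolding t_def by simp
  moreover have "cox_len (cls (rev (ws @ t))) = cox_len (cls (ws @ t))" using ws t by (intro len_rev) simp
  moreover have "cox_len (cls (rev ws)) = cox_len (cls ws)" using len_rev ws by simp
  ultimately show ?thesis using rt unfolding t_def by simp
qed

lemma etaR_append: "a \<in> lists I \<Longrightarrow> b \<in> lists I \<Longrightarrow> t \<in> lists I \<Longrightarrow>
  eta (rev (a @ b)) t = (eta (rev b) t \<noteq> eta (rev a) (b @ t @ rev b))"
  using eta_append[of "rev b" "rev a" t] by simp


lemma minrep_le: "J \<subseteq> I \<Longrightarrow> cls X \<in> min_reps m I J \<Longrightarrow> X \<in> lists I \<Longrightarrow> y \<in> lists J \<Longrightarrow>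
  cox_len (cls X) \<le> cox_len (cls (X @ y))"
proof -
  assume J: "J \<subseteq> I" and xm: "cls X \<in> min_reps m I J" and X: "X \<in> lists I" and y: "y \<in> lists J"
  have yI: "y \<in> lists I" using y J by (meson lists_mono subsetD)
  have "cls y \<in> parabolic m I J" unfolding parabolic_def using y by blast
  then have "cox_len (cls X) \<le> cox_len (cox_mult m I (cls X) (cls y))"
    using xm unfolding min_reps_def by blast
  then show ?thesis using mult_cls[OF X yI] by simp
qed

lemma main_step:
  assumes J: "J \<subseteq> I" and X: "X \<in> lists I" and U: "U \<in> lists I" and W: "W \<in> lists I"
    and Zp: "Zp \<in> lists J" and p: "p \<in> lists I" and i: "i \<in> I"
    and xm: "cls X \<in> min_reps m I J" and wm: "cls W \<in> min_reps m I J"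
    and UW: "(U @ W, X @ Zp) \<in> CE"
    and lt: "cox_len (cls (Zp @ (p @ [i] @ rev p))) < cox_len (cls Zp)"
  shows "cox_len (cls (U @ W @ (p @ [i] @ rev p) @ rev W)) < cox_len (cls U)
     \<and> (\<exists>ZJ \<in> lists J. (Zp @ (p @ [i] @ rev p), ZJ) \<in> CE)"
proof -
  define T where "T = p @ [i] @ rev p"
  have T: "T \<in> lists I" using p i unfolding T_def by simp
  have ZpI: "Zp \<in> lists I" using Zp J by (meson lists_mono subsetD)
  have e1: "eta (rev Zp) T"
  proof (rule ccontr)
    assume "\<not> eta (rev Zp) T"
    from keyR2[OF ZpI p i] this have "cox_len (cls Zp) < cox_len (cls (Zp @ T))" unfolding T_def by simp
    with lt show False unfolding T_def by simp
  qed
  then obtain k where k: "k < length (rev Zp)" "(wrefs (rev Zp) ! k, T) \<in> CE" using eta_ex by blast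
  define tJ where "tJ = wrefs (rev Zp) ! k"
  have tJ: "tJ \<in> lists J" unfolding tJ_def using wrefs_lists[of "rev Zp" J] Zp k(1)
    by (metis length_wrefs nth_mem rev_lists subsetD)
  have tJI: "tJ \<in> lists I" using tJ J by (meson lists_mono subsetD)
  have TtJ: "(T, tJ) \<in> CE" using CE_sym k(2) unfolding tJ_def by blast
  have e2: "\<not> eta (rev X) (Zp @ T @ rev Zp)"
  proof
    assume "eta (rev X) (Zp @ T @ rev Zp)"
    then have "eta (rev X) ((Zp @ p) @ [i] @ rev (Zp @ p))" unfolding T_def by simp
    from keyR1[OF X _ i this] ZpI p
    have "cox_len (cls (X @ (Zp @ p) @ [i] @ rev (Zp @ p))) < cox_len (cls X)" by simp
    then have A: "cox_len (cls (X @ Zp @ T @ rev Zp)) < cox_len (cls X)" unfolding T_def by simp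
    have "(X @ Zp @ T @ rev Zp, X @ Zp @ tJ @ rev Zp) \<in> CE"
      using CE_cong[OF TtJ, of "X @ Zp" "rev Zp"] X ZpI by simp
    then have B: "cls (X @ Zp @ T @ rev Zp) = cls (X @ (Zp @ tJ @ rev Zp))" using cls_eqI by simp
    have "Zp @ tJ @ rev Zp \<in> lists J" using Zp tJ by simp
    from minrep_le[OF J xm X this] A B show False by simp
  qed
  have e3: "eta (rev (X @ Zp)) T" using etaR_append[OF X ZpI T] e1 e2 by simp
  have e4: "eta (rev (U @ W)) T" using e3 eta_CE[OF CE_rev[OF UW] T] by simp
  have e5: "\<not> eta (rev W) T"
  proof
    assume "eta (rev W) T"
    from keyR1[OF W p i] this have A: "cox_len (cls (W @ T)) < cox_len (cls W)" unfolding T_def by simp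
    have "cls (W @ T) = cls (W @ tJ)" using cls_eqI CE_app[OF CE_refl[OF W] TtJ] by simp
    with minrep_le[OF J wm W tJ] A show False by simp
  qed
  have e6: "eta (rev U) (W @ T @ rev W)" using etaR_append[OF U W T] e4 e5 by simp
  then have "eta (rev U) ((W @ p) @ [i] @ rev (W @ p))" unfolding T_def by simp
  from keyR1[OF U _ i this] W p
  have L: "cox_len (cls (U @ W @ T @ rev W)) < cox_len (cls U)" unfolding T_def by simp
  have "(Zp @ T, Zp @ tJ) \<in> CE" using CE_app[OF CE_refl[OF ZpI] TtJ] .
  moreover have "Zp @ tJ \<in> lists J" using Zp tJ by simp
  ultimately show ?thesis using L unfolding T_def by blast
qed

end

theorem lemma3p10:
  fixes m :: "'i \<Rightarrow> 'i \<Rightarrow> nat" and I J :: "'i set"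
    and u w x v v' :: "'i list set"
  assumes "weyl_matrix m I" and "finite (cox_group m I)"
    and "J \<subseteq> I"
    and "w \<in> min_reps m I J"
    and "u \<in> cox_group m I"
    and "cox_len (cox_mult m I u w) = cox_len u + cox_len w"
    and "x \<in> min_reps m I J" and "v \<in> parabolic m I J"
    and "cox_mult m I u w = cox_mult m I x v"
    and "v' \<in> cox_group m I" and "bruhat_le m I v' v"
  shows "\<exists>u' \<in> cox_group m I. bruhat_le m I u' u \<and> cox_mult m I u' w = cox_mult m I x v'"
proof -
  note J = assms(3) and wm = assms(4) and xm = assms(7)
  define R where "R = {(x, cox_mult m I x t) | x t. x \<in> cox_group m I \<and> t \<in> reflections m I
                 \<and> cox_len x < cox_len (cox_mult m I x t)}"
  have bl: "\<And>a b. bruhat_le m I a b = (a \<in> cox_group m I \<and> (a, b) \<in> R\<^sup>*)"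
    unfolding bruhat_le_def R_def by simp
  obtain X where X: "X \<in> lists I" "x = cox_elem m I X"
    using xm grp_obtain unfolding min_reps_def by blast
  obtain W where W: "W \<in> lists I" "w = cox_elem m I W"
    using wm grp_obtain unfolding min_reps_def by blast
  have xmX: "cox_elem m I X \<in> min_reps m I J" using xm X by simp
  have wmW: "cox_elem m I W \<in> min_reps m I J" using wm W by simp
  have claim: "(v', z) \<in> R\<^sup>* \<Longrightarrow> \<forall>u \<in> cox_group m I. z \<in> parabolic m I J \<longrightarrow>
      cox_mult m I u w = cox_mult m I x z \<longrightarrow>
      (\<exists>u' \<in> cox_group m I. bruhat_le m I u' u \<and> cox_mult m I u' w = cox_mult m I x v')" for z
  proof (induction rule: rtrancl_induct)
    case base
    show ?case
    proof (intro ballI impI)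
      fix u assume "u \<in> cox_group m I" "cox_mult m I u w = cox_mult m I x v'"
      then show "\<exists>u' \<in> cox_group m I. bruhat_le m I u' u \<and> cox_mult m I u' w = cox_mult m I x v'"
        using bl by blast
    qed
  next
    case (step y z)
    show ?case
    proof (intro ballI impI)
      fix u assume u: "u \<in> cox_group m I" and zp: "z \<in> parabolic m I J"
        and uz: "cox_mult m I u w = cox_mult m I x z"
      obtain tc where y: "y \<in> cox_group m I" and tc: "tc \<in> reflections m I"
        and z: "z = cox_mult m I y tc" and lyz: "cox_len y < cox_len z"
        using step.hyps(2) unfolding R_def by blast
      obtain Y where Y: "Y \<in> lists I" "y = cox_elem m I Y" using grp_obtain[OF y] by blast
      obtain p i where p: "p \<in> lists I" and i: "i \<in> I" and tcp: "tc = cox_elem m I (p @ [i] @ rev p)"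
        using tc unfolding reflections_def by blast
      define T where "T = p @ [i] @ rev p"
      have T: "T \<in> lists I" using p i unfolding T_def by simp
      have rT: "rev T = T" unfolding T_def by simp
      have TT: "(T @ T, []) \<in> cox_eq m I" using CE_inv[OF T] rT by simp
      have zYT: "z = cox_elem m I (Y @ T)" using z Y tcp mult_cls[OF Y(1) T] unfolding T_def by simp
      obtain Zp where Zp: "Zp \<in> lists J" "z = cox_elem m I Zp" using zp unfolding parabolic_def by blast
      have ZpI: "Zp \<in> lists I" using Zp J by (meson lists_mono subsetD)
      obtain U where U: "U \<in> lists I" "u = cox_elem m I U" using grp_obtain[OF u] by blast
      have "cox_elem m I (U @ W) = cox_elem m I (X @ Zp)"
        using uz U W X Zp mult_cls[OF U(1) W(1)] mult_cls[OF X(1) ZpI] by simp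
      then have UW: "(U @ W, X @ Zp) \<in> cox_eq m I" using cls_eq_iff[where a="U @ W" and b="X @ Zp"] U W by simp
      have "cox_elem m I Zp = cox_elem m I (Y @ T)" using Zp(2) zYT by simp
      then have "(Zp, Y @ T) \<in> cox_eq m I" using cls_eq_iff[OF ZpI] by blast
      then have "(Zp @ T, Y @ T @ T) \<in> cox_eq m I" using CE_app[OF _ CE_refl[OF T]] by fastforce
      moreover have "(Y @ T @ T, Y) \<in> cox_eq m I" using CE_app[OF CE_refl[OF Y(1)] TT] by simp
      ultimately have ZpTY: "(Zp @ T, Y) \<in> cox_eq m I" using CE_trans by blast
      have lt: "cox_len (cox_elem m I (Zp @ T)) < cox_len (cox_elem m I Zp)"
        using lyz Zp Y cls_eqI[OF ZpTY] by simp
      from main_step[OF J X(1) U(1) W(1) Zp(1) p i xmX wmW UW] lt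
      obtain ZJ where L: "cox_len (cox_elem m I (U @ W @ T @ rev W)) < cox_len (cox_elem m I U)"
        and ZJ: "ZJ \<in> lists J" "(Zp @ T, ZJ) \<in> cox_eq m I"
        unfolding T_def by blast
      define u1 where "u1 = cox_elem m I (U @ W @ T @ rev W)"
      have U1: "U @ W @ T @ rev W \<in> lists I" using U W T by simp
      have u1g: "u1 \<in> cox_group m I" unfolding u1_def using cls_grp[OF U1] .
      have "(Y, ZJ) \<in> cox_eq m I" using CE_trans[OF CE_sym[OF ZpTY] ZJ(2)] .
      then have "y = cox_elem m I ZJ" using Y(2) cls_eqI by blast
      then have yp: "y \<in> parabolic m I J" using ZJ(1) unfolding parabolic_def by blast
      have "(U @ W @ T @ rev W @ W, U @ W @ T) \<in> cox_eq m I"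
        using CE_cong[OF CE_inv2[OF W(1)], of "U @ W @ T" "[]"] U W T by simp
      moreover have "(U @ W @ T, X @ Zp @ T) \<in> cox_eq m I" using CE_app[OF UW CE_refl[OF T]] by simp
      moreover have "(X @ Zp @ T, X @ Y) \<in> cox_eq m I" using CE_app[OF CE_refl[OF X(1)] ZpTY] by simp
      ultimately have "(U @ W @ T @ rev W @ W, X @ Y) \<in> cox_eq m I" using CE_trans by blast
      then have u1y: "cox_mult m I u1 w = cox_mult m I x y"
        unfolding u1_def using mult_cls[OF U1 W(1)] mult_cls[OF X(1) Y(1)] W X Y cls_eqI by simp
      from step.IH u1g yp u1y obtain u' where u': "u' \<in> cox_group m I" "bruhat_le m I u' u1"
        "cox_mult m I u' w = cox_mult m I x v'" by blast
      define A where "A = W @ T @ rev W"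
      have A: "A \<in> lists I" using W T unfolding A_def by simp
      have rA: "rev A = A" using rT unfolding A_def by simp
      have tr: "cox_elem m I A \<in> reflections m I"
      proof -
        have "A = (W @ p) @ [i] @ rev (W @ p)" unfolding A_def T_def by simp
        moreover have "W @ p \<in> lists I" using W p by simp
        ultimately show ?thesis unfolding reflections_def using i by blast
      qed
      have "(U @ A @ A, U) \<in> cox_eq m I" using CE_app[OF CE_refl[OF U(1)] CE_inv[OF A]] rA by simp
      then have u1u: "cox_mult m I u1 (cox_elem m I A) = u"
        unfolding u1_def using mult_cls[OF U1 A] U cls_eqI unfolding A_def by simp
      have "cox_len u1 < cox_len u" using L U unfolding u1_def by simp
      then have "(u1, u) \<in> R" unfolding R_def using u1g tr u1u by force
      then have "(u', u) \<in> R\<^sup>*" using u'(2) bl by (meson rtrancl_into_rtrancl)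
      then show "\<exists>u' \<in> cox_group m I. bruhat_le m I u' u \<and> cox_mult m I u' w = cox_mult m I x v'"
        using u' bl by blast
    qed
  qed
  have "(v', v) \<in> R\<^sup>*" using assms(11) bl by blast
  from claim[OF this] assms(5,8,9) show ?thesis by blast
qed

end
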